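(* Let $\mu$ be a partition of $n$ and let $x_2^{\alpha_2}\cdots x_n^{\alpha_n}\in\mathcal{A}(\mu)$ be a monomial of degree $r$. Run the following procedure: set $\rho^{(n)}=\mu$; for $i=n,n-1,\dots,2$, impose the dimension-ordering on the current composition $\rho^{(i)}$, place the number $i$ in the box with dimension-order label $\alpha_i+1$, and delete that box to obtain a composition $\rho^{(i-1)}$ of $i-1$; finally place $1$ in the one remaining box, and let $T$ be the resulting filling of $\mu$ (all placed numbers restored). Then at every step the box with label $\alpha_i+1$ exists, $T$ is a row-strict filling of $\mu$ with exactly $r$ dimension pairs, and $\Phi(T)=x_2^{\alpha_2}\cdots x_n^{\alpha_n}$. Consequently, setting $\Psi(x^\alpha):=T$ defines a degree-preserving map $\Psi$ from $\mathcal{A}(\mu)$ to row-strict fillings of $\mu$ with $\Phi\circ\Psi=\mathrm{id}_{\mathcal{A}(\mu)}$.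
   Context: A composition $\rho$ of $n$ is a sequence of nonnegative integers summing to $n$, drawn with $\rho_k$ left-justified boxes in row $k$ (rows top to bottom, columns left to right); a partition is a weakly decreasing composition with positive parts. A filling places $1,\dots,n$ bijectively in the boxes; row-strict means entries increase left to right in each row. Dimension-ordering of a composition with $r$ nonzero rows: the far-right boxes of the nonzero rows are labelled $1,\dots,r$ in the order obtained by sorting them by column from rightmost column to leftmost, and within a column from top to bottom. Dimension pairs (with $h(j)=j$): $(a,b)$ is a dimension pair of a filling $T$ if (1) $b>a$; (2) $b$ lies in the same column as $a$ strictly below it, or in a column strictly left of $a$'s; (3) if a box immediately right of $a$ exists, containing $c$, then $b\le c$. $D^T_j$ is the set of dimension pairs $(a,j)$; $\Phi(T)=\prod_{j=2}^n x_j^{|D^T_j|}$. $\mathcal{A}(\mu)=\{\Phi(T): T \text{ a row-strict filling of }\mu\}$. *)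

theory Defs
  imports Main "HOL-Library.Product_Lexorder"
begin

text \<open>Compositions are lists of row lengths (row 0 is the top row). Boxes are
  pairs (row, column), both 0-indexed, columns left to right.\<close>

definition boxes :: "nat list \<Rightarrow> (nat \<times> nat) set" where
  "boxes \<rho> = {(k, c). k < length \<rho> \<and> c < \<rho> ! k}"

definition is_partition :: "nat list \<Rightarrow> nat \<Rightarrow> bool" where
  "is_partition \<mu> n \<longleftrightarrow> sorted (rev \<mu>) \<and> (\<forall>p \<in> set \<mu>. 0 < p) \<and> sum_list \<mu> = n"

definition is_filling :: "nat list \<Rightarrow> (nat \<times> nat \<Rightarrow> nat) \<Rightarrow> bool" where
  "is_filling \<rho> T \<longleftrightarrow> bij_betw T (boxes \<rho>) {1..sum_list \<rho>}"

definition row_strict_filling :: "nat list \<Rightarrow> (nat \<times> nat \<Rightarrow> nat) \<Rightarrow> bool" where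
  "row_strict_filling \<rho> T \<longleftrightarrow> is_filling \<rho> T \<and>
     (\<forall>k c. (k, Suc c) \<in> boxes \<rho> \<longrightarrow> T (k, c) < T (k, Suc c))"

text \<open>Dimension pair (a,b) of T (with h(j) = j).\<close>
definition dim_pair :: "nat list \<Rightarrow> (nat \<times> nat \<Rightarrow> nat) \<Rightarrow> nat \<Rightarrow> nat \<Rightarrow> bool" where
  "dim_pair \<rho> T a b \<longleftrightarrow> (\<exists>pa \<in> boxes \<rho>. \<exists>pb \<in> boxes \<rho>. T pa = a \<and> T pb = b \<and>
     b > a \<and>
     ((snd pb = snd pa \<and> fst pb > fst pa) \<or> snd pb < snd pa) \<and>
     ((fst pa, Suc (snd pa)) \<in> boxes \<rho> \<longrightarrow> b \<le> T (fst pa, Suc (snd pa))))"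

definition dim_pairs :: "nat list \<Rightarrow> (nat \<times> nat \<Rightarrow> nat) \<Rightarrow> (nat \<times> nat) set" where
  "dim_pairs \<rho> T = {(a, b). dim_pair \<rho> T a b}"

definition D_set :: "nat list \<Rightarrow> (nat \<times> nat \<Rightarrow> nat) \<Rightarrow> nat \<Rightarrow> nat set" where
  "D_set \<rho> T j = {a. dim_pair \<rho> T a j}"

text \<open>Monomials x_2^a_2 ... x_n^a_n are represented by their exponent function
  (zero outside 2..n).  Phi(T).\<close>
definition Phi :: "nat list \<Rightarrow> (nat \<times> nat \<Rightarrow> nat) \<Rightarrow> (nat \<Rightarrow> nat)" where
  "Phi \<rho> T = (\<lambda>j. if 2 \<le> j \<and> j \<le> sum_list \<rho> then card (D_set \<rho> T j) else 0)"

definition A_set :: "nat list \<Rightarrow> (nat \<Rightarrow> nat) set" where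
  "A_set \<mu> = {Phi \<mu> T | T. row_strict_filling \<mu> T}"

definition mon_degree :: "nat \<Rightarrow> (nat \<Rightarrow> nat) \<Rightarrow> nat" where
  "mon_degree n \<alpha> = (\<Sum>j = 2..n. \<alpha> j)"

text \<open>Dimension ordering: the far-right boxes of the nonzero rows, sorted by column
  from rightmost to leftmost, then by row top to bottom.  Label l corresponds to
  list index l - 1.\<close>
definition end_boxes :: "nat list \<Rightarrow> (nat \<times> nat) list" where
  "end_boxes \<rho> = [(k, \<rho> ! k - 1). k \<leftarrow> [0..<length \<rho>], 0 < \<rho> ! k]"

definition dim_order :: "nat list \<Rightarrow> (nat \<times> nat) list" where
  "dim_order \<rho> = sort_key (\<lambda>(k, c). (- int c, k)) (end_boxes \<rho>)"

definition sel_box :: "(nat \<Rightarrow> nat) \<Rightarrow> nat \<Rightarrow> nat list \<Rightarrow> nat \<times> nat" where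
  "sel_box \<alpha> i \<rho> = dim_order \<rho> ! (\<alpha> i)"

definition del_step :: "(nat \<Rightarrow> nat) \<Rightarrow> nat \<Rightarrow> nat list \<Rightarrow> nat list" where
  "del_step \<alpha> i \<rho> = (let b = sel_box \<alpha> i \<rho> in \<rho>[fst b := \<rho> ! fst b - 1])"

text \<open>descend alpha i rho k: starting from rho = rho^(i), the composition after k deletion
  steps, i.e. rho^(i-k).\<close>
fun descend :: "(nat \<Rightarrow> nat) \<Rightarrow> nat \<Rightarrow> nat list \<Rightarrow> nat \<Rightarrow> nat list" where
  "descend \<alpha> i \<rho> 0 = \<rho>"
| "descend \<alpha> i \<rho> (Suc k) = descend \<alpha> (i - 1) (del_step \<alpha> i \<rho>) k"

fun proc :: "(nat \<Rightarrow> nat) \<Rightarrow> nat \<Rightarrow> nat list \<Rightarrow> (nat \<times> nat \<Rightarrow> nat)" where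
  "proc \<alpha> 0 \<rho> = (\<lambda>_. 0)"
| "proc \<alpha> (Suc 0) \<rho> = (\<lambda>b. if b \<in> boxes \<rho> then 1 else 0)"
| "proc \<alpha> (Suc (Suc m)) \<rho> =
     (proc \<alpha> (Suc m) (del_step \<alpha> (Suc (Suc m)) \<rho>))(sel_box \<alpha> (Suc (Suc m)) \<rho> := Suc (Suc m))"

end

theory Submission
  imports Defs
begin

definition dkey :: "nat \<times> nat \<Rightarrow> int \<times> nat" where
  "dkey = (\<lambda>(k, c). (- int c, k))"

lemma dim_order_dkey: "dim_order \<rho> = sort_key dkey (end_boxes \<rho>)"
  by (simp add: dim_order_def dkey_def)

lemma inj_dkey: "inj dkey"
  by (auto simp: inj_def dkey_def)

lemma set_end_boxes:
  "set (end_boxes \<rho>) = {(k, \<rho> ! k - 1) | k. k < length \<rho> \<and> 0 < \<rho> ! k}"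
  by (auto simp: end_boxes_def)

lemma concat_map_if: "concat (map (\<lambda>k. if P k then [f k] else []) xs) = map f (filter P xs)"
  by (induction xs) auto

lemma distinct_end_boxes: "distinct (end_boxes \<rho>)"
proof -
  have "end_boxes \<rho> = map (\<lambda>k. (k, \<rho> ! k - 1)) (filter (\<lambda>k. 0 < \<rho> ! k) [0..<length \<rho>])"
    unfolding end_boxes_def by (simp add: concat_map_if)
  thus ?thesis by (simp add: distinct_map inj_on_def)
qed

lemma sorted_index:
  fixes f :: "'a \<Rightarrow> 'b::linorder"
  assumes "sorted (map f L)" "distinct (map f L)" "p \<in> set L"
  shows "card {x \<in> set L. f x < f p} < length L \<and> L ! card {x \<in> set L. f x < f p} = p"
  using assms
proof (induction L)
  case Nil thus ?case by simp
next
  case (Cons y L)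
  show ?case
  proof (cases "y = p")
    case True
    have e: "{x \<in> set (y # L). f x < f p} = {}"
      using Cons.prems True by (auto simp: less_le_not_le)
    show ?thesis unfolding e using True by simp
  next
    case False
    hence pL: "p \<in> set L" using Cons.prems by auto
    have lt: "f y < f p" using Cons.prems pL
      by (auto simp: order_le_less)
    have "{x \<in> set (y # L). f x < f p} = insert y {x \<in> set L. f x < f p}"
      using lt by auto
    moreover have "y \<notin> set L" using Cons.prems by auto
    ultimately have "card {x \<in> set (y # L). f x < f p} = Suc (card {x \<in> set L. f x < f p})"
      by simp
    moreover have "card {x \<in> set L. f x < f p} < length L \<and> L ! card {x \<in> set L. f x < f p} = p"
      using Cons pL by auto
    ultimately show ?thesis by simp
  qed
qed

lemma dim_order_index:
  assumes "p \<in> set (end_boxes \<rho>)"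
  shows "card {x \<in> set (end_boxes \<rho>). dkey x < dkey p} < length (dim_order \<rho>)
     \<and> dim_order \<rho> ! card {x \<in> set (end_boxes \<rho>). dkey x < dkey p} = p"
proof -
  have d: "distinct (map dkey (sort_key dkey (end_boxes \<rho>)))"
    using distinct_end_boxes inj_dkey by (simp add: distinct_map inj_on_subset[OF inj_dkey])
  show ?thesis
    using sorted_index[OF sorted_sort_key d, of p] assms by (simp add: dim_order_dkey)
qed

lemma top_box:
  assumes rs: "row_strict_filling \<rho> T" and s: "sum_list \<rho> = i" and i: "1 \<le> i"
  obtains k where "k < length \<rho>" "0 < \<rho> ! k" "T (k, \<rho> ! k - 1) = i"
proof -
  have bij: "bij_betw T (boxes \<rho>) {1..i}" using rs s by (simp add: row_strict_filling_def is_filling_def)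
  hence "i \<in> T ` boxes \<rho>" using i by (simp add: bij_betw_def)
  then obtain k c where kc: "(k, c) \<in> boxes \<rho>" "T (k, c) = i" by auto
  hence kl: "k < length \<rho>" "c < \<rho> ! k" by (auto simp: boxes_def)
  have "\<not> Suc c < \<rho> ! k"
  proof
    assume "Suc c < \<rho> ! k"
    hence b: "(k, Suc c) \<in> boxes \<rho>" using kl by (simp add: boxes_def)
    hence "T (k, c) < T (k, Suc c)" using rs by (simp add: row_strict_filling_def)
    moreover have "T (k, Suc c) \<in> {1..i}" using b bij by (auto simp: bij_betw_def)
    ultimately show False using kc by simp
  qed
  hence "c = \<rho> ! k - 1" using kl by simp
  thus ?thesis using that kl kc by simp
qed

lemma D_top:
  assumes rs: "row_strict_filling \<rho> T" and s: "sum_list \<rho> = i"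
    and k: "k < length \<rho>" "0 < \<rho> ! k" "T (k, \<rho> ! k - 1) = i"
  shows "card (D_set \<rho> T i) = card {x \<in> set (end_boxes \<rho>). dkey x < dkey (k, \<rho> ! k - 1)}"
proof -
  define p where "p = (k, \<rho> ! k - 1)"
  define E where "E = {x \<in> set (end_boxes \<rho>). dkey x < dkey p}"
  have bij: "bij_betw T (boxes \<rho>) {1..i}" using rs s by (simp add: row_strict_filling_def is_filling_def)
  hence inj: "inj_on T (boxes \<rho>)" and img: "T ` boxes \<rho> = {1..i}" by (auto simp: bij_betw_def)
  have pB: "p \<in> boxes \<rho>" using k by (auto simp: boxes_def p_def)
  have Tp: "T p = i" using k p_def by simp
  have EB: "E \<subseteq> boxes \<rho>" by (auto simp: E_def set_end_boxes boxes_def)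
  have "D_set \<rho> T i = T ` E"
  proof
    show "D_set \<rho> T i \<subseteq> T ` E"
    proof
      fix a assume "a \<in> D_set \<rho> T i"
      then obtain pa pb where pa: "pa \<in> boxes \<rho>" and pb: "pb \<in> boxes \<rho>" and
        Ta: "T pa = a" and Tb: "T pb = i" and ai: "a < i" and
        pos: "(snd pb = snd pa \<and> fst pb > fst pa) \<or> snd pb < snd pa" and
        c3: "(fst pa, Suc (snd pa)) \<in> boxes \<rho> \<longrightarrow> i \<le> T (fst pa, Suc (snd pa))"
        by (auto simp: D_set_def dim_pair_def)
      have "pb = p" using inj pb pB Tb Tp by (auto simp: inj_on_def)
      obtain k' c' where pa': "pa = (k', c')" by (cases pa)
      have nr: "(k', Suc c') \<notin> boxes \<rho>"
      proof
        assume r: "(k', Suc c') \<in> boxes \<rho>"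
        hence "T (k', Suc c') \<in> {1..i}" using img by auto
        hence "T (k', Suc c') = i" using c3 r pa' by simp
        hence "(k', Suc c') = p" using inj r pB Tp by (auto simp: inj_on_def)
        thus False using pos \<open>pb = p\<close> pa' by (auto simp: p_def)
      qed
      have "k' < length \<rho>" "c' < \<rho> ! k'" using pa pa' by (auto simp: boxes_def)
      hence "c' = \<rho> ! k' - 1" using nr by (auto simp: boxes_def)
      hence "pa \<in> set (end_boxes \<rho>)" using \<open>k' < length \<rho>\<close> \<open>c' < \<rho> ! k'\<close> pa'
        by (auto simp: set_end_boxes)
      moreover have "dkey pa < dkey p" using pos \<open>pb = p\<close> pa' by (auto simp: dkey_def p_def)
      ultimately show "a \<in> T ` E" using Ta by (auto simp: E_def)
    qed
  next
    show "T ` E \<subseteq> D_set \<rho> T i"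
    proof
      fix a assume "a \<in> T ` E"
      then obtain x where x: "x \<in> E" "a = T x" by auto
      then obtain k' where k': "x = (k', \<rho> ! k' - 1)" "k' < length \<rho>" "0 < \<rho> ! k'"
        and dk: "dkey x < dkey p" by (auto simp: E_def set_end_boxes)
      have xB: "x \<in> boxes \<rho>" using x EB by auto
      have "x \<noteq> p" using dk by auto
      hence "T x \<noteq> i" using inj xB pB Tp by (auto simp: inj_on_def)
      moreover have "T x \<in> {1..i}" using xB img by auto
      ultimately have lt: "T x < i" by simp
      have pos: "(snd p = snd x \<and> fst p > fst x) \<or> snd p < snd x"
        using dk k' by (auto simp: dkey_def p_def)
      have nr: "(fst x, Suc (snd x)) \<notin> boxes \<rho>" using k' by (auto simp: boxes_def)
      show "a \<in> D_set \<rho> T i" unfolding D_set_def dim_pair_def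
        using xB pB Tp lt pos nr x by blast
    qed
  qed
  moreover have "inj_on T E" using inj EB inj_on_subset by blast
  ultimately show ?thesis by (simp add: card_image E_def p_def)
qed

lemma del_lemma:
  assumes rs: "row_strict_filling \<rho> T" and s: "sum_list \<rho> = i"
    and k: "k < length \<rho>" "0 < \<rho> ! k" "T (k, \<rho> ! k - 1) = i"
  shows "boxes (\<rho>[k := \<rho> ! k - 1]) = boxes \<rho> - {(k, \<rho> ! k - 1)}"
    and "sum_list (\<rho>[k := \<rho> ! k - 1]) = i - 1"
    and "row_strict_filling (\<rho>[k := \<rho> ! k - 1]) T"
    and "\<And>j. j < i \<Longrightarrow> D_set (\<rho>[k := \<rho> ! k - 1]) T j = D_set \<rho> T j"
proof -
  define p where "p = (k, \<rho> ! k - 1)"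
  define \<rho>' where "\<rho>' = \<rho>[k := \<rho> ! k - 1]"
  show B': "boxes \<rho>' = boxes \<rho> - {p}"
    using k by (auto simp: boxes_def \<rho>'_def p_def nth_list_update split: if_splits)
  show "sum_list \<rho>' = i - 1" using k s by (simp add: \<rho>'_def sum_list_update)
  have bij: "bij_betw T (boxes \<rho>) {1..i}" using rs s by (simp add: row_strict_filling_def is_filling_def)
  have pB: "p \<in> boxes \<rho>" using k by (auto simp: boxes_def p_def)
  have Tp: "T p = i" using k p_def by simp
  have "bij_betw T (boxes \<rho> - {p}) ({1..i} - {i})"
    by (rule bij_betw_DiffI[OF bij]) (use pB Tp bij in \<open>auto simp: bij_betw_def\<close>)
  moreover have "{1..i} - {i} = {1..sum_list \<rho>'}"
    using \<open>sum_list \<rho>' = i - 1\<close> by auto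
  ultimately have "is_filling \<rho>' T" using B' by (simp add: is_filling_def)
  thus "row_strict_filling \<rho>' T" using rs B' by (auto simp: row_strict_filling_def)
  fix j assume j: "j < i"
  have inj: "inj_on T (boxes \<rho>)" using bij by (simp add: bij_betw_def)
  show "D_set \<rho>' T j = D_set \<rho> T j"
  proof (rule set_eqI, rule iffI)
    fix a assume "a \<in> D_set \<rho>' T j"
    then obtain pa pb where pa: "pa \<in> boxes \<rho>'" and pb: "pb \<in> boxes \<rho>'" and
        Ta: "T pa = a" and Tb: "T pb = j" and ai: "a < j" and
        pos: "(snd pb = snd pa \<and> fst pb > fst pa) \<or> snd pb < snd pa" and
        c3: "(fst pa, Suc (snd pa)) \<in> boxes \<rho>' \<longrightarrow> j \<le> T (fst pa, Suc (snd pa))"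
        by (auto simp: D_set_def dim_pair_def)
    have c3': "(fst pa, Suc (snd pa)) \<in> boxes \<rho> \<longrightarrow> j \<le> T (fst pa, Suc (snd pa))"
      using c3 B' Tp j by (cases "(fst pa, Suc (snd pa)) = p") auto
    show "a \<in> D_set \<rho> T j" unfolding D_set_def dim_pair_def
      using pa pb B' Ta Tb ai pos c3' by blast
  next
    fix a assume "a \<in> D_set \<rho> T j"
    then obtain pa pb where pa: "pa \<in> boxes \<rho>" and pb: "pb \<in> boxes \<rho>" and
        Ta: "T pa = a" and Tb: "T pb = j" and ai: "a < j" and
        pos: "(snd pb = snd pa \<and> fst pb > fst pa) \<or> snd pb < snd pa" and
        c3: "(fst pa, Suc (snd pa)) \<in> boxes \<rho> \<longrightarrow> j \<le> T (fst pa, Suc (snd pa))"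
        by (auto simp: D_set_def dim_pair_def)
    have "pa \<noteq> p" "pb \<noteq> p" using Ta Tb Tp ai j by auto
    hence "pa \<in> boxes \<rho>'" "pb \<in> boxes \<rho>'" using pa pb B' by auto
    moreover have "(fst pa, Suc (snd pa)) \<in> boxes \<rho>' \<longrightarrow> j \<le> T (fst pa, Suc (snd pa))"
      using c3 B' by auto
    ultimately show "a \<in> D_set \<rho>' T j" unfolding D_set_def dim_pair_def
      using Ta Tb ai pos by blast
  qed
qed

lemma main_ind:
  "sum_list \<rho> = i \<Longrightarrow> 1 \<le> i \<Longrightarrow> row_strict_filling \<rho> T \<Longrightarrow>
   (\<forall>j\<in>{2..i}. \<alpha> j = card (D_set \<rho> T j)) \<Longrightarrow>
   (\<forall>b\<in>boxes \<rho>. proc \<alpha> i \<rho> b = T b) \<and>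
   (\<forall>i'\<in>{2..i}. \<alpha> i' < length (dim_order (descend \<alpha> i \<rho> (i - i'))))"
proof (induction i arbitrary: \<rho> T)
  case 0 thus ?case by simp
next
  case (Suc m)
  show ?case
  proof (cases m)
    case 0
    have "\<forall>b\<in>boxes \<rho>. T b = 1"
      using Suc.prems 0 by (auto simp: row_strict_filling_def is_filling_def bij_betw_def)
    thus ?thesis using 0 by simp
  next
    case (Suc m')
    note prems = Suc.prems
    obtain k where k: "k < length \<rho>" "0 < \<rho> ! k" "T (k, \<rho> ! k - 1) = Suc m"
      using top_box[OF prems(3) prems(1) prems(2)] by blast
    define p where "p = (k, \<rho> ! k - 1)"
    define \<rho>' where "\<rho>' = \<rho>[k := \<rho> ! k - 1]"
    have pe: "p \<in> set (end_boxes \<rho>)" using k by (auto simp: set_end_boxes p_def)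
    have ai: "\<alpha> (Suc m) = card {x \<in> set (end_boxes \<rho>). dkey x < dkey p}"
      using D_top[OF prems(3) prems(1) k] prems(4) Suc by (simp add: p_def)
    have idx: "\<alpha> (Suc m) < length (dim_order \<rho>)" "sel_box \<alpha> (Suc m) \<rho> = p"
      using dim_order_index[OF pe] ai by (simp_all add: sel_box_def)
    have del: "del_step \<alpha> (Suc m) \<rho> = \<rho>'"
      using idx by (simp add: del_step_def \<rho>'_def p_def)
    note DL = del_lemma[OF prems(3) prems(1) k, folded \<rho>'_def p_def]
    have IH: "(\<forall>b\<in>boxes \<rho>'. proc \<alpha> m \<rho>' b = T b) \<and>
      (\<forall>i'\<in>{2..m}. \<alpha> i' < length (dim_order (descend \<alpha> m \<rho>' (m - i'))))"
    proof (rule Suc.IH)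
      show "sum_list \<rho>' = m" using DL(2) by simp
      show "1 \<le> m" using Suc by simp
      show "row_strict_filling \<rho>' T" using DL(3) .
      show "\<forall>j\<in>{2..m}. \<alpha> j = card (D_set \<rho>' T j)" using DL(4) prems(4) by auto
    qed
    have P: "proc \<alpha> (Suc m) \<rho> = (proc \<alpha> m \<rho>')(p := Suc m)"
      using Suc idx del by simp
    have A: "\<forall>b\<in>boxes \<rho>. proc \<alpha> (Suc m) \<rho> b = T b"
      using IH DL(1) k P by (auto simp: p_def)
    have B: "\<forall>i'\<in>{2..Suc m}. \<alpha> i' < length (dim_order (descend \<alpha> (Suc m) \<rho> (Suc m - i')))"
    proof
      fix i' assume i': "i' \<in> {2..Suc m}"
      show "\<alpha> i' < length (dim_order (descend \<alpha> (Suc m) \<rho> (Suc m - i')))"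
      proof (cases "i' = Suc m")
        case True thus ?thesis using idx by simp
      next
        case False
        hence "Suc m - i' = Suc (m - i')" using i' by auto
        hence "descend \<alpha> (Suc m) \<rho> (Suc m - i') = descend \<alpha> m \<rho>' (m - i')"
          using del by simp
        thus ?thesis using IH i' False by auto
      qed
    qed
    show ?thesis using A B by blast
  qed
qed

lemma dim_pair_cong:
  assumes "\<forall>b\<in>boxes \<rho>. T' b = T b"
  shows "dim_pair \<rho> T' = dim_pair \<rho> T"
proof (intro ext)
  fix a b
  show "dim_pair \<rho> T' a b = dim_pair \<rho> T a b"
    unfolding dim_pair_def
  proof (intro bex_cong refl)
    fix pa pb assume "pa \<in> boxes \<rho>" "pb \<in> boxes \<rho>"
    thus "(T' pa = a \<and> T' pb = b \<and> b > a \<and>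
     ((snd pb = snd pa \<and> fst pb > fst pa) \<or> snd pb < snd pa) \<and>
     ((fst pa, Suc (snd pa)) \<in> boxes \<rho> \<longrightarrow> b \<le> T' (fst pa, Suc (snd pa)))) =
     (T pa = a \<and> T pb = b \<and> b > a \<and>
     ((snd pb = snd pa \<and> fst pb > fst pa) \<or> snd pb < snd pa) \<and>
     ((fst pa, Suc (snd pa)) \<in> boxes \<rho> \<longrightarrow> b \<le> T (fst pa, Suc (snd pa))))"
      using assms by auto
  qed
qed

theorem mainTheorem5:
  fixes \<mu> :: "nat list" and n r :: nat and \<alpha> :: "nat \<Rightarrow> nat"
  assumes "is_partition \<mu> n"
    and "\<alpha> \<in> A_set \<mu>"
    and "mon_degree n \<alpha> = r"
  shows "(\<forall>i \<in> {2..n}. \<alpha> i < length (dim_order (descend \<alpha> n \<mu> (n - i))))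
    \<and> row_strict_filling \<mu> (proc \<alpha> n \<mu>)
    \<and> card (dim_pairs \<mu> (proc \<alpha> n \<mu>)) = r
    \<and> Phi \<mu> (proc \<alpha> n \<mu>) = \<alpha>"
proof -
  obtain T where rs: "row_strict_filling \<mu> T" and aP: "\<alpha> = Phi \<mu> T"
    using assms(2) by (auto simp: A_set_def)
  have s: "sum_list \<mu> = n" using assms(1) by (simp add: is_partition_def)
  have aj: "\<forall>j\<in>{2..n}. \<alpha> j = card (D_set \<mu> T j)" using aP s by (simp add: Phi_def)
  have bij: "bij_betw T (boxes \<mu>) {1..n}" using rs s by (simp add: row_strict_filling_def is_filling_def)
  define T' where "T' = proc \<alpha> n \<mu>"
  have R: "(\<forall>b\<in>boxes \<mu>. T' b = T b) \<and>
      (\<forall>i\<in>{2..n}. \<alpha> i < length (dim_order (descend \<alpha> n \<mu> (n - i))))"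
  proof (cases "n = 0")
    case True
    hence "boxes \<mu> = {}" using bij by (auto simp: bij_betw_def)
    thus ?thesis using True by simp
  next
    case False
    thus ?thesis using main_ind[OF s _ rs aj] unfolding T'_def by simp
  qed
  have agree: "\<forall>b\<in>boxes \<mu>. T' b = T b" using R by blast
  have dp: "dim_pair \<mu> T' = dim_pair \<mu> T" by (rule dim_pair_cong[OF agree])
  have rs': "row_strict_filling \<mu> T'"
  proof -
    have "bij_betw T' (boxes \<mu>) {1..n}" using bij agree bij_betw_cong by metis
    moreover have "\<forall>k c. (k, Suc c) \<in> boxes \<mu> \<longrightarrow> T' (k, c) < T' (k, Suc c)"
    proof (intro allI impI)
      fix k c assume b: "(k, Suc c) \<in> boxes \<mu>"
      hence "(k, c) \<in> boxes \<mu>" by (auto simp: boxes_def)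
      thus "T' (k, c) < T' (k, Suc c)" using b agree rs by (auto simp: row_strict_filling_def)
    qed
    ultimately show ?thesis using s by (simp add: row_strict_filling_def is_filling_def)
  qed
  have Ph: "Phi \<mu> T' = \<alpha>" proof -
    have eq: "D_set \<mu> T' = D_set \<mu> T" using dp by (simp add: D_set_def fun_eq_iff)
    show ?thesis unfolding aP Phi_def eq ..
  qed
  have card: "card (dim_pairs \<mu> T) = r"
  proof -
    have sw: "prod.swap ` dim_pairs \<mu> T = Sigma {2..n} (D_set \<mu> T)"
    proof (rule set_eqI)
      fix x :: "nat \<times> nat"
      obtain b a where x: "x = (b, a)" by (cases x)
      have "dim_pair \<mu> T a b \<Longrightarrow> b \<in> {2..n}"
      proof -
        assume "dim_pair \<mu> T a b"
        then obtain pa pb where "pa \<in> boxes \<mu>" "pb \<in> boxes \<mu>" "T pa = a" "T pb = b" "a < b"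
          by (auto simp: dim_pair_def)
        thus "b \<in> {2..n}" using bij by (force simp: bij_betw_def)
      qed
      thus "x \<in> prod.swap ` dim_pairs \<mu> T \<longleftrightarrow> x \<in> Sigma {2..n} (D_set \<mu> T)"
        using x by (force simp: dim_pairs_def D_set_def)
    qed
    have fin: "\<forall>b\<in>{2..n}. finite (D_set \<mu> T b)"
    proof
      fix b
      have "D_set \<mu> T b \<subseteq> {..<b}" by (auto simp: D_set_def dim_pair_def)
      thus "finite (D_set \<mu> T b)" using finite_subset by blast
    qed
    have "card (dim_pairs \<mu> T) = card (prod.swap ` dim_pairs \<mu> T)"
      by (simp add: card_image)
    also have "\<dots> = (\<Sum>b\<in>{2..n}. card (D_set \<mu> T b))"
      using sw fin by (simp add: card_SigmaI)
    also have "\<dots> = r" using aj assms(3) by (simp add: mon_degree_def)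
    finally show ?thesis .
  qed
  have "dim_pairs \<mu> T' = dim_pairs \<mu> T" using dp by (simp add: dim_pairs_def)
  thus ?thesis using R rs' Ph card unfolding T'_def by simp
qed

end
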